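(* Let $(F_0,F_1,F_2)$ be a gapset filtration such that $\max F_0=\max F_1=\max F_2=m$. Let $F'_i=F_i\setminus\{m\}$ for $i=0,1,2$. Then $(F'_0,F'_1,F'_2)$ is a gapset filtration.
   Context: A gapset is a finite set $G \subset \mathbb{N}_+$ such that for all $z \in G$, whenever $z=x+y$ with $x,y\in\mathbb{N}_+$, we have $x\in G$ or $y\in G$. For $k\ge1$, a $k$-filtration is a sequence $(F_0,\dots,F_t)$ with $F_0=[1,k-1]\supseteq F_1\supseteq\dots\supseteq F_t$; it is a gapset filtration if $\bigcup_i(ik+F_i)$ is a gapset (so a filtration $(F_0,F_1,F_2)$ with $\max F_0=m$ is an $(m+1)$-filtration, and $(F'_0,F'_1,F'_2)$ is considered as an $m$-filtration). Here $j+A=\{j+a:a\in A\}$. *)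

theory Defs
  imports Main
begin

definition gapset :: "nat set \<Rightarrow> bool" where
  "gapset G \<longleftrightarrow> finite G \<and> 0 \<notin> G \<and>
     (\<forall>z\<in>G. \<forall>x y. 0 < x \<longrightarrow> 0 < y \<longrightarrow> z = x + y \<longrightarrow> x \<in> G \<or> y \<in> G)"

definition k_filtration :: "nat \<Rightarrow> nat set list \<Rightarrow> bool" where
  "k_filtration k Fs \<longleftrightarrow> 1 \<le> k \<and> Fs \<noteq> [] \<and> Fs ! 0 = {1..k-1} \<and>
     (\<forall>i. Suc i < length Fs \<longrightarrow> Fs ! Suc i \<subseteq> Fs ! i)"

definition filtration_set :: "nat \<Rightarrow> nat set list \<Rightarrow> nat set" where
  "filtration_set k Fs = (\<Union>i<length Fs. (\<lambda>a. i * k + a) ` (Fs ! i))"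

definition gapset_filtration :: "nat \<Rightarrow> nat set list \<Rightarrow> bool" where
  "gapset_filtration k Fs \<longleftrightarrow> k_filtration k Fs \<and> gapset (filtration_set k Fs)"

end

theory Submission
  imports Defs
begin

lemma fs3: "filtration_set k [A,B,C] = A \<union> (\<lambda>a. k+a)`B \<union> (\<lambda>a. 2*k+a)`C"
proof -
  have "{..<length [A,B,C]} = {0,1,2::nat}" by auto
  then show ?thesis unfolding filtration_set_def by (auto simp: mult_2)
qed

theorem mainTheorem15:
  fixes F0 F1 F2 :: "nat set" and m :: nat
  assumes "gapset_filtration (m + 1) [F0, F1, F2]"
    and "F0 \<noteq> {}" and "F1 \<noteq> {}" and "F2 \<noteq> {}"
    and "Max F0 = m" and "Max F1 = m" and "Max F2 = m"
  shows "gapset_filtration m [F0 - {m}, F1 - {m}, F2 - {m}]"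
proof -
  have kf: "k_filtration (m+1) [F0,F1,F2]" and gs: "gapset (filtration_set (m+1) [F0,F1,F2])"
    using assms(1) unfolding gapset_filtration_def by auto
  have F0: "F0 = {1..m}" using kf unfolding k_filtration_def by auto
  have F10: "F1 \<subseteq> F0" using kf unfolding k_filtration_def
    apply (elim conjE) apply (drule spec[of _ 0]) by simp
  have F21: "F2 \<subseteq> F1" using kf unfolding k_filtration_def
    apply (elim conjE) apply (drule spec[of _ 1]) by simp
  have m1: "1 \<le> m" using assms(2) F0 by auto
  define G where "G = F0 \<union> (\<lambda>a. (m+1)+a)`F1 \<union> (\<lambda>a. 2*(m+1)+a)`F2"
  have gG: "\<And>z x y. z \<in> G \<Longrightarrow> 0 < x \<Longrightarrow> 0 < y \<Longrightarrow> z = x + y \<Longrightarrow> x \<in> G \<or> y \<in> G"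
    using gs unfolding gapset_def fs3 G_def by blast
  define G' where "G' = (F0 - {m}) \<union> (\<lambda>a. m+a)`(F1 - {m}) \<union> (\<lambda>a. 2*m+a)`(F2 - {m})"
  have small: "\<And>x. 0 < x \<Longrightarrow> x < m \<Longrightarrow> x \<in> G'" unfolding G'_def F0 by auto
  have kf': "k_filtration m [F0 - {m}, F1 - {m}, F2 - {m}]"
    unfolding k_filtration_def
  proof (intro conjI allI impI)
    show "1 \<le> m" by fact
    show "[F0 - {m}, F1 - {m}, F2 - {m}] ! 0 = {1..m - 1}" using F0 m1 by auto
    fix i assume "Suc i < length [F0 - {m}, F1 - {m}, F2 - {m}]"
    then have "i = 0 \<or> i = 1" by auto
    then show "[F0 - {m}, F1 - {m}, F2 - {m}] ! Suc i \<subseteq> [F0 - {m}, F1 - {m}, F2 - {m}] ! i"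
      using F10 F21 by auto
  qed auto
  have main: "x \<in> G' \<or> y \<in> G'" if z: "z \<in> G'" and x: "0 < x" and y: "0 < y" and zxy: "z = x + y" for z x y
  proof (cases "x < m \<or> y < m")
    case True then show ?thesis using small x y by blast
  next
    case False
    then have ge: "m \<le> x" "m \<le> y" by auto
    have F1r: "\<And>a. a \<in> F1 \<Longrightarrow> 1 \<le> a \<and> a \<le> m" using F10 F0 by auto
    have F2r: "\<And>a. a \<in> F2 \<Longrightarrow> 1 \<le> a \<and> a \<le> m" using F21 F10 F0 by auto
    from z obtain a where a: "a \<in> F2" "a \<noteq> m" "z = 2*m + a"
      unfolding G'_def F0 using ge zxy F1r by fastforce
    then have am: "a < m" using F2r by fastforce
    obtain b c where b: "x = m + b" and c: "y = m + c" using ge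
      by (metis le_add_diff_inverse)
    have bc: "b + c = a" using a zxy b c by simp
    show ?thesis
    proof (cases "b = 0 \<or> c = 0")
      case True
      then show ?thesis using bc b c a am F21 unfolding G'_def by auto
    next
      case False
      have "2*(m+1)+a \<in> G" using a(1) unfolding G_def by auto
      then have "(m+1+b) \<in> G \<or> (m+1+c) \<in> G"
        by (rule gG) (use bc in auto)
      then have "b \<in> F1 \<or> c \<in> F1" unfolding G_def F0 using bc am F2r by fastforce
      then show ?thesis using bc am b c unfolding G'_def by auto
    qed
  qed
  have fs': "filtration_set m [F0 - {m}, F1 - {m}, F2 - {m}] = G'" unfolding fs3 G'_def by simp
  have "gapset G'"
    unfolding gapset_def
  proof (intro conjI)
    show "finite G'" unfolding G'_def F0 using F10 F21 F0
      by (meson finite_Diff finite_Un finite_atLeastAtMost finite_imageI finite_subset)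
    show "0 \<notin> G'" unfolding G'_def F0 using m1 by auto
  qed (use main in blast)
  then show ?thesis unfolding gapset_filtration_def fs' using kf' by simp
qed

end
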